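(* Let $(X,\mathcal{O}(X))$ be a measurable space, $\mathcal{A}$ a unital $C^*$-algebra and $\mathcal{H}$ a Hilbert space, and let $\mathcal{I}:\mathcal{O}(X)\to CP(\mathcal{A},\mathcal{B}(\mathcal{H}))$ be a UCP instrument. Then the following are equivalent: (i) $\mathcal{I}$ is a spectral instrument; (ii) $\mathcal{I}(A,a)=\phi_\mathcal{I}(a)\mu_\mathcal{I}(A)=\mu_\mathcal{I}(A)\phi_\mathcal{I}(a)$ for all $a\in\mathcal{A}$, $A\in\mathcal{O}(X)$, where $\phi_\mathcal{I}:\mathcal{A}\to\mathcal{B}(\mathcal{H})$ is a unital $*$-homomorphism and $\mu_\mathcal{I}:\mathcal{O}(X)\to\mathcal{B}(\mathcal{H})$ is a spectral measure.
   Context: A CP instrument is a map $\mathcal{I}$ from $\mathcal{O}(X)$ to the completely positive maps $\mathcal{A}\to\mathcal{B}(\mathcal{H})$ such that for all $a\in\mathcal{A}$, $h,k\in\mathcal{H}$, $A\mapsto\langle h,\mathcal{I}(A)(a)k\rangle$ is a countably additive complex measure; write $\mathcal{I}(A,a)=\mathcal{I}(A)(a)$. It is UCP (normalized) if $\mathcal{I}(X)(1_\mathcal{A})=I_\mathcal{H}$. It is spectral if it is normalized and $\mathcal{I}(A)$ is a $*$-homomorphism for every $A\in\mathcal{O}(X)$. Marginals: $\mu_\mathcal{I}(A)=\mathcal{I}(A,1_\mathcal{A})$ and $\phi_\mathcal{I}=\mathcal{I}(X,\cdot)$. A spectral measure is a projection-valued measure. *)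

theory Defs
  imports "HOL-Analysis.Analysis"
begin

class complex_vector = real_vector +
  fixes scaleC :: "complex \<Rightarrow> 'a \<Rightarrow> 'a"
  assumes scaleC_add_right: "scaleC c (x + y) = scaleC c x + scaleC c y"
    and scaleC_add_left: "scaleC (c + d) x = scaleC c x + scaleC d x"
    and scaleC_scaleC: "scaleC c (scaleC d x) = scaleC (c * d) x"
    and scaleC_one: "scaleC 1 x = x"
    and scaleR_scaleC: "scaleR r x = scaleC (complex_of_real r) x"

text \<open>Complex inner product space; the inner product is conjugate-linear in the
first and linear in the second argument; the norm is the one induced by it.\<close>
class complex_inner = complex_vector + real_normed_vector +
  fixes cinner :: "'a \<Rightarrow> 'a \<Rightarrow> complex"
  assumes cinner_add_right: "cinner x (y + z) = cinner x y + cinner x z"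
    and cinner_scaleC_right: "cinner x (scaleC c y) = c * cinner x y"
    and cinner_commute: "cinner x y = cnj (cinner y x)"
    and cinner_norm: "cinner x x = complex_of_real ((norm x)\<^sup>2)"

class chilbert_space = complex_inner + complete_space

class cstar_algebra = complex_vector + real_normed_algebra_1 + banach +
  fixes cstar :: "'a \<Rightarrow> 'a"
  assumes scaleC_mult_left: "scaleC c (a * b) = scaleC c a * b"
    and scaleC_mult_right: "scaleC c (a * b) = a * scaleC c b"
    and cstar_cstar: "cstar (cstar a) = a"
    and cstar_add: "cstar (a + b) = cstar a + cstar b"
    and cstar_scaleC: "cstar (scaleC c a) = scaleC (cnj c) (cstar a)"
    and cstar_mult: "cstar (a * b) = cstar b * cstar a"
    and cstar_identity: "norm (cstar a * a) = (norm a)\<^sup>2"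

definition is_clinear :: "('a::complex_vector \<Rightarrow> 'b::complex_vector) \<Rightarrow> bool" where
  "is_clinear f \<longleftrightarrow> (\<forall>x y. f (x + y) = f x + f y) \<and> (\<forall>c x. f (scaleC c x) = scaleC c (f x))"

definition bounded_op :: "('h::complex_inner \<Rightarrow> 'h) \<Rightarrow> bool" where
  "bounded_op T \<longleftrightarrow> is_clinear T \<and> (\<exists>K. \<forall>x. norm (T x) \<le> K * norm x)"

definition selfadjoint_op :: "('h::complex_inner \<Rightarrow> 'h) \<Rightarrow> bool" where
  "selfadjoint_op T \<longleftrightarrow> (\<forall>x y. cinner x (T y) = cinner (T x) y)"

definition projection_op :: "('h::complex_inner \<Rightarrow> 'h) \<Rightarrow> bool" where
  "projection_op P \<longleftrightarrow> bounded_op P \<and> selfadjoint_op P \<and> P \<circ> P = P"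

definition linear_map_to_ops :: "('a::cstar_algebra \<Rightarrow> 'h::complex_inner \<Rightarrow> 'h) \<Rightarrow> bool" where
  "linear_map_to_ops \<phi> \<longleftrightarrow> (\<forall>a. bounded_op (\<phi> a))
     \<and> (\<forall>a b. \<phi> (a + b) = (\<lambda>x. \<phi> a x + \<phi> b x))
     \<and> (\<forall>c a. \<phi> (scaleC c a) = (\<lambda>x. scaleC c (\<phi> a x)))"

text \<open>Complete positivity: for every n the amplification
  \<phi>_n : M_n(A) \<rightarrow> M_n(B(H)) = B(H^n) sends positive elements of M_n(A),
  i.e. those of the form B* B with B \<in> M_n(A), to positive operators on H^n.\<close>
definition completely_positive :: "('a::cstar_algebra \<Rightarrow> 'h::complex_inner \<Rightarrow> 'h) \<Rightarrow> bool" where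
  "completely_positive \<phi> \<longleftrightarrow> linear_map_to_ops \<phi> \<and>
     (\<forall>(n::nat) (B::nat \<Rightarrow> nat \<Rightarrow> 'a) (\<xi>::nat \<Rightarrow> 'h).
        let s = (\<Sum>i<n. \<Sum>j<n. cinner (\<xi> i) (\<phi> (\<Sum>k<n. cstar (B k i) * B k j) (\<xi> j)))
        in Im s = 0 \<and> Re s \<ge> 0)"

definition star_hom :: "('a::cstar_algebra \<Rightarrow> 'h::complex_inner \<Rightarrow> 'h) \<Rightarrow> bool" where
  "star_hom \<phi> \<longleftrightarrow> linear_map_to_ops \<phi>
     \<and> (\<forall>a b. \<phi> (a * b) = \<phi> a \<circ> \<phi> b)
     \<and> (\<forall>a x y. cinner x (\<phi> (cstar a) y) = cinner (\<phi> a x) y)"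

definition unital_star_hom :: "('a::cstar_algebra \<Rightarrow> 'h::complex_inner \<Rightarrow> 'h) \<Rightarrow> bool" where
  "unital_star_hom \<phi> \<longleftrightarrow> star_hom \<phi> \<and> \<phi> 1 = id"

definition cp_instrument :: "'x measure \<Rightarrow> ('x set \<Rightarrow> 'a::cstar_algebra \<Rightarrow> 'h::complex_inner \<Rightarrow> 'h) \<Rightarrow> bool" where
  "cp_instrument M I \<longleftrightarrow> (\<forall>A\<in>sets M. completely_positive (I A)) \<and>
     (\<forall>a h k (F::nat \<Rightarrow> 'x set). range F \<subseteq> sets M \<longrightarrow> disjoint_family F \<longrightarrow>
        (\<lambda>n. cinner h (I (F n) a k)) sums cinner h (I (\<Union>n. F n) a k))"

definition ucp_instrument :: "'x measure \<Rightarrow> ('x set \<Rightarrow> 'a::cstar_algebra \<Rightarrow> 'h::complex_inner \<Rightarrow> 'h) \<Rightarrow> bool" where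
  "ucp_instrument M I \<longleftrightarrow> cp_instrument M I \<and> I (space M) 1 = id"

definition spectral_instrument :: "'x measure \<Rightarrow> ('x set \<Rightarrow> 'a::cstar_algebra \<Rightarrow> 'h::complex_inner \<Rightarrow> 'h) \<Rightarrow> bool" where
  "spectral_instrument M I \<longleftrightarrow> ucp_instrument M I \<and> (\<forall>A\<in>sets M. star_hom (I A))"

definition mu_I :: "('x set \<Rightarrow> 'a::cstar_algebra \<Rightarrow> 'h \<Rightarrow> 'h) \<Rightarrow> 'x set \<Rightarrow> 'h \<Rightarrow> 'h" where
  "mu_I I A = I A 1"

definition phi_I :: "'x measure \<Rightarrow> ('x set \<Rightarrow> 'a \<Rightarrow> 'h \<Rightarrow> 'h) \<Rightarrow> 'a \<Rightarrow> 'h \<Rightarrow> 'h" where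
  "phi_I M I = I (space M)"

definition spectral_measure :: "'x measure \<Rightarrow> ('x set \<Rightarrow> 'h::complex_inner \<Rightarrow> 'h) \<Rightarrow> bool" where
  "spectral_measure M P \<longleftrightarrow> (\<forall>A\<in>sets M. projection_op (P A)) \<and> P (space M) = id \<and>
     (\<forall>h k (F::nat \<Rightarrow> 'x set). range F \<subseteq> sets M \<longrightarrow> disjoint_family F \<longrightarrow>
        (\<lambda>n. cinner h (P (F n) k)) sums cinner h (P (\<Union>n. F n) k))"

end

theory Submission
  imports Defs
begin

lemma cinner_zero_right': "cinner x (0::'a::complex_inner) = 0"
proof -
  have "cinner x (0::'a) = cinner x 0 + cinner x 0"
    by (metis add.right_neutral cinner_add_right)
  then show ?thesis by simp
qed

lemma cinner_diff_right': "cinner x (y - z::'a::complex_inner) = cinner x y - cinner x z"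
proof -
  have "cinner x y = cinner x (y - z) + cinner x z"
    by (metis cinner_add_right diff_add_cancel)
  then show ?thesis by simp
qed

lemma cinner_eqI':
  assumes "\<And>h. cinner h v = cinner h (w::'a::complex_inner)"
  shows "v = w"
proof -
  have "cinner (v - w) (v - w) = 0" using assms by (simp add: cinner_diff_right')
  then have "complex_of_real ((norm (v - w))\<^sup>2) = 0" by (simp add: cinner_norm)
  then show ?thesis by simp
qed

lemma bop_add: "bounded_op T \<Longrightarrow> T (x + y) = T x + T y"
  by (simp add: bounded_op_def is_clinear_def)

lemma bop_zero: "bounded_op T \<Longrightarrow> T 0 = 0"
  by (metis add.right_neutral add_left_cancel bop_add)

lemma two_zero: "(x::'a::real_vector) + x = 0 \<Longrightarrow> x = 0"
proof -
  assume "x + x = 0"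
  then have "scaleR 2 x = 0" by (simp add: scaleR_2)
  then show ?thesis by simp
qed

lemma orth_proj:
  fixes P Q :: "'a::real_vector \<Rightarrow> 'a"
  assumes addP: "\<And>x y. P (x + y) = P x + P y"
    and PP: "\<And>x. P (P x) = P x" and QQ: "\<And>x. Q (Q x) = Q x"
    and R: "\<And>x. P (P x + Q x) + Q (P x + Q x) = P x + Q x"
    and addQ: "\<And>x y. Q (x + y) = Q x + Q y"
  shows "P (Q x) = 0 \<and> Q (P x) = 0"
proof -
  have P0: "P 0 = 0" by (metis add.right_neutral add_left_cancel addP)
  have star: "\<And>x. P (Q x) + Q (P x) = 0"
  proof -
    fix x
    have "P x + P (Q x) + (Q (P x) + Q x) = P x + Q x"
      using R[of x] by (simp add: addP addQ PP QQ)
    then show "P (Q x) + Q (P x) = 0"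
      by (simp add: algebra_simps)
  qed
  have a: "P (Q x) + P (Q (P x)) = 0"
    using arg_cong[OF star[of x], of P] by (simp add: addP PP P0)
  have b: "P (Q (P x)) + Q (P x) = 0"
    using star[of "P x"] by (simp add: PP)
  have "P (Q x) = Q (P x)"
    using a b by (metis add.commute add_left_cancel)
  then have "P (Q x) + P (Q x) = 0" using star[of x] by simp
  then have "P (Q x) = 0" by (rule two_zero)
  then show ?thesis using \<open>P (Q x) = Q (P x)\<close> by simp
qed

lemma inst_empty:
  fixes M :: "'x measure" and I :: "'x set \<Rightarrow> 'b::cstar_algebra \<Rightarrow> 'h::complex_inner \<Rightarrow> 'h"
  assumes "cp_instrument M I"
  shows "I {} a k = 0"
proof -
  have "\<And>h. cinner h (I {} a k) = 0"
  proof -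
    fix h
    have "(\<lambda>n. cinner h (I ((\<lambda>n. {}) n) a k)) sums cinner h (I (\<Union>n. (\<lambda>n. {}) n) a k)"
    proof -
      have "range (\<lambda>n::nat. {}) \<subseteq> sets M" "disjoint_family (\<lambda>n::nat. ({}::'x set))"
        by (auto simp: disjoint_family_on_def)
      moreover have "\<forall>a h k (F::nat \<Rightarrow> 'x set). range F \<subseteq> sets M \<longrightarrow> disjoint_family F \<longrightarrow>
        (\<lambda>n. cinner h (I (F n) a k)) sums cinner h (I (\<Union>n. F n) a k)"
        using assms(1)[unfolded cp_instrument_def, THEN conjunct2] .
      ultimately show ?thesis by (elim allE[of _ a] allE[of _ h] allE[of _ k] allE[of _ "\<lambda>n::nat. {}"]) simp
    qed
    then have "(\<lambda>n. cinner h (I {} a k)) sums cinner h (I {} a k)" by simp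
    then have "(\<lambda>n. cinner h (I {} a k)) \<longlonglongrightarrow> 0"
      using summable_LIMSEQ_zero sums_summable by blast
    then show "cinner h (I {} a k) = 0" by (simp add: LIMSEQ_const_iff)
  qed
  then show ?thesis using cinner_eqI'[of "I {} a k" 0] by (simp add: cinner_zero_right')
qed

lemma inst_add:
  fixes M :: "'x measure" and I :: "'x set \<Rightarrow> 'b::cstar_algebra \<Rightarrow> 'h::complex_inner \<Rightarrow> 'h"
  assumes "cp_instrument M I" "A \<in> sets M" "B \<in> sets M" "A \<inter> B = {}"
  shows "I (A \<union> B) a k = I A a k + I B a k"
proof (rule cinner_eqI')
  fix h
  have "(\<lambda>n. cinner h (I (binaryset A B n) a k)) sums cinner h (I (\<Union>n. binaryset A B n) a k)"
  proof -
    have "range (binaryset A B) \<subseteq> sets M" "disjoint_family (binaryset A B)"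
      using assms(2-4) by (auto simp: disjoint_family_on_def binaryset_def)
    moreover have "\<forall>a h k (F::nat \<Rightarrow> 'x set). range F \<subseteq> sets M \<longrightarrow> disjoint_family F \<longrightarrow>
        (\<lambda>n. cinner h (I (F n) a k)) sums cinner h (I (\<Union>n. F n) a k)"
      using assms(1)[unfolded cp_instrument_def, THEN conjunct2] .
    ultimately show ?thesis by (elim allE[of _ a] allE[of _ h] allE[of _ k] allE[of _ "binaryset A B"]) simp
  qed
  moreover have "(\<lambda>n. cinner h (I (binaryset A B n) a k)) sums (cinner h (I A a k) + cinner h (I B a k))"
    using binaryset_sums[where f="\<lambda>S. cinner h (I S a k)"] inst_empty[OF assms(1)]
    by (simp add: cinner_zero_right')
  ultimately show "cinner h (I (A \<union> B) a k) = cinner h (I A a k + I B a k)"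
    by (simp add: UN_binaryset_eq sums_unique2 cinner_add_right)
qed

lemma cstar_one: "cstar (1::'a::cstar_algebra) = 1"
  by (metis cstar_cstar cstar_mult mult.left_neutral mult.right_neutral)

theorem theorem2p10:
  fixes M :: "'x measure"
    and I :: "'x set \<Rightarrow> 'a::cstar_algebra \<Rightarrow> 'h::chilbert_space \<Rightarrow> 'h"
  assumes "ucp_instrument M I"
  shows "spectral_instrument M I \<longleftrightarrow>
           (unital_star_hom (phi_I M I) \<and> spectral_measure M (mu_I I) \<and>
            (\<forall>a. \<forall>A\<in>sets M. I A a = phi_I M I a \<circ> mu_I I A \<and> I A a = mu_I I A \<circ> phi_I M I a))"
proof -
  have cp: "cp_instrument M I" and un: "I (space M) 1 = id"
    using assms by (auto simp: ucp_instrument_def)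
  have cps: "\<forall>a h k (F::nat \<Rightarrow> 'x set). range F \<subseteq> sets M \<longrightarrow> disjoint_family F \<longrightarrow>
        (\<lambda>n. cinner h (I (F n) a k)) sums cinner h (I (\<Union>n. F n) a k)"
    using cp[unfolded cp_instrument_def, THEN conjunct2] .
  have lin: "\<And>A. A \<in> sets M \<Longrightarrow> linear_map_to_ops (I A)"
    using cp by (auto simp: cp_instrument_def completely_positive_def)
  have bop: "\<And>A a. A \<in> sets M \<Longrightarrow> bounded_op (I A a)"
    using lin by (auto simp: linear_map_to_ops_def)
  have sp: "space M \<in> sets M" by simp
  show ?thesis
  proof
    assume si: "spectral_instrument M I"
    then have sh: "\<And>A. A \<in> sets M \<Longrightarrow> star_hom (I A)"
      by (auto simp: spectral_instrument_def)
    have mult: "I A (a * b) x = I A a (I A b x)" if "A \<in> sets M" for A a b x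
      using sh[OF that] by (auto simp: star_hom_def)
    have adj: "cinner x (I A (cstar a) y) = cinner (I A a x) y" if "A \<in> sets M" for A a x y
      using sh[OF that] by (auto simp: star_hom_def)
    have r1: "I A a (I A 1 x) = I A a x" if "A \<in> sets M" for A a x
      using mult[OF that, of a 1 x, unfolded mult_1_right] by (rule sym)
    have l1: "I A 1 (I A a x) = I A a x" if "A \<in> sets M" for A a x
      using mult[OF that, of 1 a x, unfolded mult_1_left] by (rule sym)
    have ush: "unital_star_hom (phi_I M I)"
      using sh[OF sp] un by (simp add: unital_star_hom_def phi_I_def)
    have proj: "projection_op (I A 1)" if A: "A \<in> sets M" for A
    proof -
      have "selfadjoint_op (I A 1)"
        using adj[OF A, of _ 1] by (simp add: selfadjoint_op_def cstar_one)
      moreover have "I A 1 \<circ> I A 1 = I A 1"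
        using r1[OF A, of 1] by (simp add: fun_eq_iff)
      ultimately show "projection_op (I A 1)" using bop[OF A] by (simp add: projection_op_def)
    qed
    have sm: "spectral_measure M (mu_I I)"
      unfolding spectral_measure_def mu_I_def
    proof (intro conjI ballI allI impI)
      fix A assume "A \<in> sets M" then show "projection_op (I A 1)" by (rule proj)
    next
      show "I (space M) 1 = id" by (rule un)
    next
      fix h k and F :: "nat \<Rightarrow> 'x set"
      assume "range F \<subseteq> sets M" "disjoint_family F"
      then show "(\<lambda>n. cinner h (I (F n) 1 k)) sums cinner h (I (\<Union>n. F n) 1 k)"
        using cps by blast
    qed
    have dec: "I A a = phi_I M I a \<circ> mu_I I A \<and> I A a = mu_I I A \<circ> phi_I M I a"
      if A: "A \<in> sets M" for a A
    proof -
      define B where "B = space M - A"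
      have B: "B \<in> sets M" using A by (simp add: B_def)
      have AB: "A \<union> B = space M" using sets.sets_into_space[OF A] by (auto simp: B_def)
      have dis: "A \<inter> B = {}" by (auto simp: B_def)
      have split: "\<And>b x. I (space M) b x = I A b x + I B b x"
        using inst_add[OF cp A B dis] AB by simp
      have sum1: "\<And>x. I A 1 x + I B 1 x = x"
        using split[of 1] un by simp
      have orth: "\<And>x. I A 1 (I B 1 x) = 0 \<and> I B 1 (I A 1 x) = 0"
      proof (rule orth_proj)
        show "\<And>x y. I A 1 (x + y) = I A 1 x + I A 1 y" using bop_add[OF bop[OF A]] .
        show "\<And>x y. I B 1 (x + y) = I B 1 x + I B 1 y" using bop_add[OF bop[OF B]] .
        show "\<And>x. I A 1 (I A 1 x) = I A 1 x" using r1[OF A] .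
        show "\<And>x. I B 1 (I B 1 x) = I B 1 x" using r1[OF B] .
        show "\<And>x. I A 1 (I A 1 x + I B 1 x) + I B 1 (I A 1 x + I B 1 x) = I A 1 x + I B 1 x"
          by (simp only: sum1)
      qed
      have "I A a x = I (space M) a (I A 1 x)" for x
      proof -
        have "I B a (I A 1 x) = I B a (I B 1 (I A 1 x))"
          by (simp only: r1[OF B])
        also have "\<dots> = 0" using orth bop_zero[OF bop[OF B]] by simp
        finally show ?thesis using split[of a "I A 1 x"] r1[OF A, of a x] by simp
      qed
      moreover have "I A a x = I A 1 (I (space M) a x)" for x
      proof -
        have "I A 1 (I B a x) = I A 1 (I B 1 (I B a x))"
          by (simp only: l1[OF B])
        also have "\<dots> = 0" using orth by simp
        finally show ?thesis using split[of a x] l1[OF A, of a x] bop_add[OF bop[OF A]] by simp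
      qed
      ultimately show ?thesis by (simp add: fun_eq_iff phi_I_def mu_I_def)
    qed
    show "unital_star_hom (phi_I M I) \<and> spectral_measure M (mu_I I) \<and>
            (\<forall>a. \<forall>A\<in>sets M. I A a = phi_I M I a \<circ> mu_I I A \<and> I A a = mu_I I A \<circ> phi_I M I a)"
      using ush sm dec by blast
  next
    assume H: "unital_star_hom (phi_I M I) \<and> spectral_measure M (mu_I I) \<and>
            (\<forall>a. \<forall>A\<in>sets M. I A a = phi_I M I a \<circ> mu_I I A \<and> I A a = mu_I I A \<circ> phi_I M I a)"
    note H1 = H[THEN conjunct1] and H2 = H[THEN conjunct2, THEN conjunct1]
      and H3 = H[THEN conjunct2, THEN conjunct2]
    have pmult: "\<And>a b x. I (space M) (a * b) x = I (space M) a (I (space M) b x)"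
      using H1 by (auto simp: unital_star_hom_def star_hom_def phi_I_def)
    have padj: "\<And>a x y. cinner x (I (space M) (cstar a) y) = cinner (I (space M) a x) y"
      using H1 by (auto simp: unital_star_hom_def star_hom_def phi_I_def)
    have d1: "I A a x = I (space M) a (I A 1 x)" if "A \<in> sets M" for a A x
    proof -
      have "I A a = phi_I M I a \<circ> mu_I I A" using H3 that by blast
      from fun_cong[OF this, of x] show ?thesis by (simp add: phi_I_def mu_I_def)
    qed
    have d2: "I A a x = I A 1 (I (space M) a x)" if "A \<in> sets M" for a A x
    proof -
      have "I A a = mu_I I A \<circ> phi_I M I a" using H3 that by blast
      from fun_cong[OF this, of x] show ?thesis by (simp add: phi_I_def mu_I_def)
    qed
    have pr: "\<And>A. A \<in> sets M \<Longrightarrow> projection_op (I A 1)"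
      using H2 by (auto simp: spectral_measure_def mu_I_def)
    have idem: "\<And>A x. A \<in> sets M \<Longrightarrow> I A 1 (I A 1 x) = I A 1 x"
      using pr by (auto simp: projection_op_def fun_eq_iff)
    have sa: "\<And>A x y. A \<in> sets M \<Longrightarrow> cinner x (I A 1 y) = cinner (I A 1 x) y"
      using pr by (auto simp: projection_op_def selfadjoint_op_def)
    have "star_hom (I A)" if A: "A \<in> sets M" for A
    proof -
      have m: "I A (a * b) = I A a \<circ> I A b" for a b
      proof
        fix x
        have "I A (a * b) x = I (space M) a (I (space M) b (I A 1 x))"
          using d1[OF A, of "a*b" x] pmult by simp
        also have "\<dots> = I (space M) a (I (space M) b (I A 1 (I A 1 x)))"
          using idem[OF A, of x] by simp
        also have "\<dots> = I (space M) a (I A b (I A 1 x))"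
          using d1[OF A, of b "I A 1 x"] by simp
        also have "\<dots> = I (space M) a (I A 1 (I (space M) b (I A 1 x)))"
          using d2[OF A, of b "I A 1 x"] by simp
        also have "\<dots> = I A a (I A b x)"
          using d1[OF A, of a "I A b x"] d1[OF A, of b x] by simp
        finally show "I A (a * b) x = (I A a \<circ> I A b) x" by simp
      qed
      have ad: "cinner x (I A (cstar a) y) = cinner (I A a x) y" for a x y
      proof -
        have "cinner x (I A (cstar a) y) = cinner x (I A 1 (I (space M) (cstar a) y))"
          using d2[OF A, of "cstar a" y] by simp
        also have "\<dots> = cinner (I A 1 x) (I (space M) (cstar a) y)" using sa[OF A] by simp
        also have "\<dots> = cinner (I (space M) a (I A 1 x)) y" using padj by simp
        also have "\<dots> = cinner (I A a x) y" using d1[OF A, of a x] by simp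
        finally show ?thesis .
      qed
      show ?thesis using lin[OF A] m ad by (simp add: star_hom_def)
    qed
    then show "spectral_instrument M I" using assms by (simp add: spectral_instrument_def)
  qed
qed

end
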